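(* Let $0<\epsilon<\pi/2$. For the navigation model with parameter $\epsilon$, every configuration of $\mathscr{C}'$ is $1$-looping.
   Context: $d=2$; a marked point is $x=(\xi,u)\in\mathbb{R}^2\times[0,1]$. Navigation model with parameter $\epsilon$: for $x=(\xi,u)$ let $C(x)=\xi+\{(r\cos\beta,r\sin\beta):r>0,\ |\beta-2\pi u|<\epsilon\}$; for a locally finite configuration $\varphi\subset\mathbb{R}^2\times[0,1]$ and $x\in\varphi$, $h(\varphi,x)$ is the marked point of $\varphi$ whose location is the unique closest point to $\xi$ (Euclidean norm) among the locations of points of $\varphi$ lying in $C(x)$; $\mathscr{C}'$ is the set of configurations for which these closest points exist and are unique for every $x\in\varphi$. Graph edges $x\to h(\varphi,x)$; $\mathrm{For}(x,\varphi)=\{x,h(\varphi,x),h(\varphi,h(\varphi,x)),\dots\}$; $\mathrm{Back}(x,\varphi)=\{y\in\varphi:x\in\mathrm{For}(y,\varphi)\}$. $k$-looping: $\varphi\in\mathscr{C}'$ is $k$-looping if for every $x\in\varphi$ there is an open ball $A_x\subset(\mathbb{R}^2\times[0,1])^k$ such that for all $(x_1,\dots,x_k)\in A_x$ (with $\varphi\cup\{x_1,\dots,x_k\}\in\mathscr{C}'$): (i) $\mathrm{For}(x,\varphi\cup\{x_1,\dots,x_k\})\subset\{x,x_1,\dots,x_k\}$; (ii) each $x_i$ lies in the connected component of $x$ in the graph on $\varphi\cup\{x_1,\dots,x_k\}$ and $\mathrm{For}(x_i,\varphi\cup\{x_1,\dots,x_k\})\subset\{x,x_1,\dots,x_k\}$;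 (iii) every $y\in\varphi\setminus\{x\}$ with $h(\varphi\cup\{x_1,\dots,x_k\},y)\ne h(\varphi,y)$ satisfies $h(\varphi\cup\{x_1,\dots,x_k\},y)\in\mathrm{Back}(x,\varphi\cup\{x_1,\dots,x_k\})\cap\{x,x_1,\dots,x_k\}$. *)

theory Defs
  imports "HOL-Analysis.Analysis"
begin

type_synonym mpoint = "(real \<times> real) \<times> real"

definition mark_space :: "mpoint set" where
  "mark_space = UNIV \<times> {0..1}"

definition cone :: "real \<Rightarrow> mpoint \<Rightarrow> (real \<times> real) set" where
  "cone eps x = {fst x + (r * cos b, r * sin b) | r b. r > 0 \<and> \<bar>b - 2 * pi * snd x\<bar> < eps}"

definition locally_finite_conf :: "mpoint set \<Rightarrow> bool" where
  "locally_finite_conf phi \<longleftrightarrow> phi \<subseteq> mark_space \<and> (\<forall>B. bounded B \<longrightarrow> finite (phi \<inter> B))"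

definition is_closest :: "real \<Rightarrow> mpoint set \<Rightarrow> mpoint \<Rightarrow> mpoint \<Rightarrow> bool" where
  "is_closest eps phi x y \<longleftrightarrow> y \<in> phi \<and> fst y \<in> cone eps x \<and>
     (\<forall>z\<in>phi. fst z \<in> cone eps x \<longrightarrow> dist (fst x) (fst y) \<le> dist (fst x) (fst z))"

definition Cprime :: "real \<Rightarrow> mpoint set set" where
  "Cprime eps = {phi. locally_finite_conf phi \<and> (\<forall>x\<in>phi. \<exists>!y. is_closest eps phi x y)}"

definition nav :: "real \<Rightarrow> mpoint set \<Rightarrow> mpoint \<Rightarrow> mpoint" where
  "nav eps phi x = (THE y. is_closest eps phi x y)"

definition For :: "real \<Rightarrow> mpoint \<Rightarrow> mpoint set \<Rightarrow> mpoint set" where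
  "For eps x phi = {(nav eps phi ^^ n) x | n. True}"

definition Back :: "real \<Rightarrow> mpoint \<Rightarrow> mpoint set \<Rightarrow> mpoint set" where
  "Back eps x phi = {y \<in> phi. x \<in> For eps y phi}"

definition nav_edges :: "real \<Rightarrow> mpoint set \<Rightarrow> (mpoint \<times> mpoint) set" where
  "nav_edges eps phi = {(y, nav eps phi y) | y. y \<in> phi}"

definition component :: "real \<Rightarrow> mpoint set \<Rightarrow> mpoint \<Rightarrow> mpoint set" where
  "component eps phi x = {y. (x, y) \<in> (nav_edges eps phi \<union> (nav_edges eps phi)\<inverse>)\<^sup>*}"

definition tuple_ball :: "nat \<Rightarrow> mpoint list \<Rightarrow> real \<Rightarrow> mpoint list set" where
  "tuple_ball k c r = {xs. length xs = k \<and>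
      sqrt (\<Sum>i<k. (dist (xs ! i) (c ! i))\<^sup>2) < r}"

definition k_looping :: "real \<Rightarrow> nat \<Rightarrow> mpoint set \<Rightarrow> bool" where
  "k_looping eps k phi \<longleftrightarrow> phi \<in> Cprime eps \<and>
    (\<forall>x\<in>phi. \<exists>c r. length c = k \<and> r > 0 \<and>
       tuple_ball k c r \<subseteq> {xs. set xs \<subseteq> mark_space} \<and>
       (\<forall>xs\<in>tuple_ball k c r. phi \<union> set xs \<in> Cprime eps \<longrightarrow>
          (let psi = phi \<union> set xs; S = insert x (set xs) in
             For eps x psi \<subseteq> S \<and>
             (\<forall>xi\<in>set xs. xi \<in> component eps psi x \<and> For eps xi psi \<subseteq> S) \<and>
             (\<forall>y\<in>phi - {x}. nav eps psi y \<noteq> nav eps phi y \<longrightarrow>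
                nav eps psi y \<in> Back eps x psi \<inter> S))))"

end

theory Submission imports Defs begin

lemma cos_lip: "\<bar>cos (s::real) - cos t\<bar> \<le> \<bar>s - t\<bar>"
proof -
  have "\<bar>cos s - cos t\<bar> = 2 * \<bar>sin ((s + t) / 2)\<bar> * \<bar>sin ((t - s) / 2)\<bar>"
    by (simp add: cos_diff_cos abs_mult)
  also have "\<dots> \<le> 2 * 1 * \<bar>(t - s) / 2\<bar>"
    by (intro mult_mono abs_sin_x_le_abs_x) auto
  finally show ?thesis by simp
qed

lemma sin_lip: "\<bar>sin (s::real) - sin t\<bar> \<le> \<bar>s - t\<bar>"
proof -
  have "\<bar>sin s - sin t\<bar> = 2 * \<bar>sin ((s - t) / 2)\<bar> * \<bar>cos ((s + t) / 2)\<bar>"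
    by (simp add: sin_diff_sin abs_mult)
  also have "\<dots> \<le> 2 * \<bar>(s - t) / 2\<bar> * 1"
    by (intro mult_mono abs_sin_x_le_abs_x) auto
  finally show ?thesis by simp
qed

lemma cone_crit:
  fixes w1 w2 :: real
  assumes e: "0 < eps" "eps < pi"
    and h: "w1 * cos a + w2 * sin a > sqrt (w1\<^sup>2 + w2\<^sup>2) * cos eps"
  shows "\<exists>s b. s > 0 \<and> \<bar>b - a\<bar> < eps \<and> (w1, w2) = (s * cos b, s * sin b)"
proof -
  define s where "s = sqrt (w1\<^sup>2 + w2\<^sup>2)"
  have s0: "s \<noteq> 0"
  proof
    assume "s = 0"
    then have "w1 = 0" "w2 = 0" unfolding s_def by (auto simp: power2_eq_square)
    with h \<open>s = 0\<close> show False unfolding s_def by simp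
  qed
  have "s \<ge> 0" unfolding s_def by simp
  then have spos: "s > 0" using s0 by simp
  have ss: "s\<^sup>2 = w1\<^sup>2 + w2\<^sup>2" unfolding s_def by simp
  define p where "p = (w1 * cos a + w2 * sin a) / s"
  define q where "q = (- w1 * sin a + w2 * cos a) / s"
  have "p\<^sup>2 + q\<^sup>2 = ((w1 * cos a + w2 * sin a)\<^sup>2 + (- w1 * sin a + w2 * cos a)\<^sup>2) / s\<^sup>2"
    unfolding p_def q_def power_divide add_divide_distrib[symmetric] by (rule refl)
  also have "(w1 * cos a + w2 * sin a)\<^sup>2 + (- w1 * sin a + w2 * cos a)\<^sup>2
      = (w1\<^sup>2 + w2\<^sup>2) * ((sin a)\<^sup>2 + (cos a)\<^sup>2)"
    by algebra
  finally have "p\<^sup>2 + q\<^sup>2 = s\<^sup>2 / s\<^sup>2" using ss by simp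
  then have "p\<^sup>2 + q\<^sup>2 = 1" using s0 by simp
  then obtain t where t: "0 \<le> t" "t < 2*pi" "p = cos t" "q = sin t"
    by (rule sincos_total_2pi)
  define t' where "t' = (if t \<le> pi then t else t - 2 * pi)"
  have ct: "cos t' = p" "sin t' = q" using t unfolding t'_def by (auto simp: cos_diff sin_diff)
  have tb: "\<bar>t'\<bar> \<le> pi" using t unfolding t'_def by auto
  have "p > cos eps" using h spos unfolding p_def s_def by (simp add: pos_less_divide_eq mult.commute)
  have tl: "\<bar>t'\<bar> < eps"
  proof (rule ccontr)
    assume "\<not> ?thesis"
    then have "cos \<bar>t'\<bar> \<le> cos eps" using e tb by (intro cos_monotone_0_pi_le) auto
    moreover have "cos \<bar>t'\<bar> = cos t'" by (simp add: abs_if)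
    ultimately show False using ct \<open>p > cos eps\<close> by simp
  qed
  have w1: "w1 = s * (cos a * p - sin a * q)"
    unfolding p_def q_def using s0
    by (simp add: field_simps) (metis (no_types, opaque_lifting) distrib_left mult.commute mult.left_commute mult.right_neutral sin_cos_squared_add3)
  have w2: "w2 = s * (sin a * p + cos a * q)"
    unfolding p_def q_def using s0
    by (simp add: field_simps) (metis (no_types, opaque_lifting) distrib_left mult.commute mult.left_commute mult.right_neutral sin_cos_squared_add3)
  show ?thesis
    apply (rule exI[of _ s], rule exI[of _ "a + t'"])
    using spos tl w1 w2 ct by (simp add: cos_add sin_add algebra_simps)
qed


lemma not_cone_self: "fst x \<notin> cone eps x"
proof
  assume "fst x \<in> cone eps x"
  then obtain r b where "r > 0" "fst x = fst x + (r * cos b, r * sin b)"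
    unfolding cone_def by auto
  then have "cos b = 0" "sin b = 0" by (auto simp: zero_prod_def)
  then show False using sin_cos_squared_add[of b] by simp
qed

lemma nav_eq:
  assumes "psi \<in> Cprime eps" "y \<in> psi" "is_closest eps psi y w"
  shows "nav eps psi y = w"
proof -
  have "\<exists>!w. is_closest eps psi y w" using assms(1,2) unfolding Cprime_def by auto
  then show ?thesis unfolding nav_def using assms(3) by (rule the1_equality)
qed

lemma nav_closest:
  assumes "psi \<in> Cprime eps" "y \<in> psi"
  shows "is_closest eps psi y (nav eps psi y)"
proof -
  have "\<exists>!w. is_closest eps psi y w" using assms(1,2) unfolding Cprime_def by auto
  then show ?thesis unfolding nav_def by (rule theI')
qed

lemma comb_part:
  assumes phi: "phi \<in> Cprime eps" and x: "x \<in> phi"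
    and P1a: "fst x1 \<in> cone eps x"
    and P1b: "\<forall>z\<in>phi. fst z \<in> cone eps x \<longrightarrow> dist (fst x) (fst x1) < dist (fst x) (fst z)"
    and P2a: "fst x \<in> cone eps x1"
    and P2b: "\<forall>z\<in>phi. fst z \<in> cone eps x1 \<longrightarrow> dist (fst x1) (fst x) \<le> dist (fst x1) (fst z)"
    and psi: "phi \<union> set [x1] \<in> Cprime eps"
  shows "let psi = phi \<union> set [x1]; S = insert x (set [x1]) in
             For eps x psi \<subseteq> S \<and>
             (\<forall>xi\<in>set [x1]. xi \<in> component eps psi x \<and> For eps xi psi \<subseteq> S) \<and>
             (\<forall>y\<in>phi - {x}. nav eps psi y \<noteq> nav eps phi y \<longrightarrow>
                nav eps psi y \<in> Back eps x psi \<inter> S)"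
proof -
  define psi where "psi = insert x1 phi"
  have psiC: "psi \<in> Cprime eps" using psi unfolding psi_def by simp
  have x1n: "x1 \<notin> phi" using P1b P1a by auto
  have c1: "is_closest eps psi x x1"
    unfolding is_closest_def psi_def using P1a P1b by (auto intro: less_imp_le)
  have n1: "nav eps psi x = x1" using nav_eq[OF psiC _ c1] x unfolding psi_def by simp
  have c2: "is_closest eps psi x1 x"
    unfolding is_closest_def psi_def using P2a P2b x not_cone_self[of x1 eps] by auto
  have n2: "nav eps psi x1 = x" using nav_eq[OF psiC _ c2] unfolding psi_def by simp
  have step: "nav eps psi z \<in> {x, x1}" if "z \<in> {x, x1}" for z
    using that n1 n2 by auto
  have it: "(nav eps psi ^^ n) y \<in> {x, x1}" if "y \<in> {x, x1}" for n y
    using that by (induction n) (simp_all add: step del: insert_iff)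
  have F1: "For eps x psi \<subseteq> {x, x1}" unfolding For_def using it[where y=x] by blast
  have F2: "For eps x1 psi \<subseteq> {x, x1}" unfolding For_def using it[where y=x1] by blast
  have "(x1, nav eps psi x1) \<in> nav_edges eps psi" unfolding nav_edges_def psi_def by blast
  then have "(x1, x) \<in> nav_edges eps psi" using n2 by simp
  then have comp: "x1 \<in> component eps psi x" unfolding component_def by auto
  have bk: "x1 \<in> Back eps x psi"
  proof -
    have "(nav eps psi ^^ 1) x1 = x" using n2 by simp
    then have "x \<in> For eps x1 psi" unfolding For_def by blast
    then show ?thesis unfolding Back_def psi_def by simp
  qed
  have iii: "nav eps psi y = x1" if y: "y \<in> phi" "nav eps psi y \<noteq> nav eps phi y" for y
  proof (rule ccontr)
    assume ne: "nav eps psi y \<noteq> x1"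
    have cl: "is_closest eps psi y (nav eps psi y)" using nav_closest[OF psiC] y unfolding psi_def by simp
    then have "is_closest eps phi y (nav eps psi y)"
      using ne unfolding is_closest_def psi_def by auto
    then have "nav eps phi y = nav eps psi y" using nav_eq[OF phi y(1)] by simp
    with y show False by simp
  qed
  have "phi \<union> set [x1] = psi" unfolding psi_def by simp
  then show ?thesis unfolding Let_def
  proof (simp only:, intro conjI ballI impI)
    show "For eps x psi \<subseteq> insert x (set [x1])" using F1 by simp
    fix xi assume "xi \<in> set [x1]"
    then have "xi = x1" by simp
    then show "xi \<in> component eps psi x" "For eps xi psi \<subseteq> insert x (set [x1])"
      using comp F2 by auto
  next
    fix y assume "y \<in> phi - {x}" "nav eps psi y \<noteq> nav eps phi y"
    then have "nav eps psi y = x1" using iii by simp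
    then show "nav eps psi y \<in> Back eps x psi \<inter> insert x (set [x1])" using bk by simp
  qed
qed


lemma in_cone_inner:
  fixes w :: "real \<times> real"
  assumes "0 < eps" "eps < pi"
    and "inner w (cos (2 * pi * snd x), sin (2 * pi * snd x)) > norm w * cos eps"
  shows "fst x + w \<in> cone eps x"
proof -
  obtain w1 w2 where w: "w = (w1, w2)" by (cases w)
  have "norm w = sqrt (w1\<^sup>2 + w2\<^sup>2)" unfolding w norm_Pair by simp
  then have h: "w1 * cos (2 * pi * snd x) + w2 * sin (2 * pi * snd x) > sqrt (w1\<^sup>2 + w2\<^sup>2) * cos eps"
    using assms(3) unfolding w by simp
  obtain s b where "s > 0" "\<bar>b - 2 * pi * snd x\<bar> < eps" "(w1, w2) = (s * cos b, s * sin b)"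
    using cone_crit[OF assms(1,2) h] by blast
  then show ?thesis unfolding cone_def w by blast
qed

lemma ev_lip: "norm ((cos (s::real), sin s) - (cos t, sin t)) \<le> 2 * \<bar>s - t\<bar>"
proof -
  have "norm ((cos s, sin s) - (cos t, sin t)) = norm (cos s - cos t, sin s - sin t)" by simp
  also have "\<dots> \<le> norm (cos s - cos t) + norm (sin s - sin t)" by (rule norm_Pair_le)
  also have "\<dots> \<le> 2 * \<bar>s - t\<bar>" using cos_lip[of s t] sin_lip[of s t] by simp
  finally show ?thesis .
qed

lemma norm_ev [simp]: "norm (cos (s::real), sin s) = 1"
  by (simp add: norm_Pair)

lemma isolation:
  assumes "locally_finite_conf phi" "x \<in> phi"
  shows "\<exists>\<rho>>0. \<forall>z\<in>phi. fst z \<noteq> fst x \<longrightarrow> \<rho> \<le> dist (fst x) (fst z)"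
proof -
  have fin: "finite (phi \<inter> cball x 3)"
    using assms(1) unfolding locally_finite_conf_def by auto
  obtain d where d: "d > 0" "\<forall>y\<in>fst ` (phi \<inter> cball x 3). y \<noteq> fst x \<longrightarrow> d \<le> dist (fst x) y"
    using finite_set_avoid[OF finite_imageI[OF fin], where a="fst x"] by blast
  have ms: "phi \<subseteq> mark_space" using assms(1) unfolding locally_finite_conf_def by auto
  show ?thesis
  proof (intro exI[of _ "min d 2"] conjI ballI impI)
    show "min d 2 > 0" using d by simp
    fix z assume z: "z \<in> phi" "fst z \<noteq> fst x"
    show "min d 2 \<le> dist (fst x) (fst z)"
    proof (cases "z \<in> cball x 3")
      case True then show ?thesis using d z by force
    next
      case False
      then have "dist x z > 3" by simp
      moreover have "dist x z \<le> dist (fst x) (fst z) + dist (snd x) (snd z)"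
        unfolding dist_prod_def by (rule sqrt_sum_squares_le_sum_abs[THEN order_trans]) simp
      moreover have "dist (snd x) (snd z) \<le> 1"
      proof -
        have "x \<in> UNIV \<times> {0..1}" "z \<in> UNIV \<times> {0..1}" using ms assms(2) z(1) unfolding mark_space_def by auto
        then have "snd x \<in> {0..1}" "snd z \<in> {0..1}" by (auto simp: mem_Times_iff)
        then show ?thesis unfolding dist_real_def by auto
      qed
      ultimately show ?thesis by simp
    qed
  qed
qed


lemma choose_u':
  assumes "0 < eps" "eps < pi/2" "u \<in> {0..1::real}"
  shows "\<exists>u'. 0 < u' \<and> u' < 1 \<and> cos (2*pi*u' - 2*pi*u) \<le> - cos (eps/2)"
proof (cases "u \<le> 1/2")
  case True
  define u' where "u' = u + 1/2 - eps/(4*pi)"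
  have a: "eps/(4*pi) < 1/8" using assms(2) by (simp add: field_simps)
  have b: "eps/(4*pi) > 0" using assms(1) by simp
  have c: "2*pi*u' - 2*pi*u = pi - eps/2" unfolding u'_def by (simp add: field_simps)
  have "0 \<le> u" "u \<le> 1" using assms(3) by auto
  then have "0 < u'" "u' < 1" using a b True unfolding u'_def by linarith+
  then show ?thesis using c by (intro exI[of _ u']) auto
next
  case False
  define u' where "u' = u - 1/2"
  have "2*pi*u' - 2*pi*u = - pi" unfolding u'_def by (simp add: field_simps)
  moreover have "cos (eps/2) \<le> 1" by simp
  ultimately show ?thesis using False assms(3) by (intro exI[of _ u']) (auto simp: u'_def)
qed


lemma geom:
  assumes e: "0 < eps" "eps < pi/2" and u: "snd x \<in> {0..1}" and rho: "\<rho> > 0"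
    and iso: "\<forall>z\<in>phi. fst z \<noteq> fst x \<longrightarrow> \<rho> \<le> dist (fst x) (fst z)"
  shows "\<exists>C r. r > 0 \<and> (\<forall>x1. dist x1 C < r \<longrightarrow> snd x1 \<in> {0..1} \<and> fst x1 \<in> cone eps x \<and>
     (\<forall>z\<in>phi. fst z \<in> cone eps x \<longrightarrow> dist (fst x) (fst x1) < dist (fst x) (fst z)) \<and>
     fst x \<in> cone eps x1 \<and>
     (\<forall>z\<in>phi. fst z \<in> cone eps x1 \<longrightarrow> dist (fst x1) (fst x) \<le> dist (fst x1) (fst z)))"
proof -
  have epi: "eps < pi" using e by simp
  define \<xi> where "\<xi> = fst x"
  define al :: real where "al = 2*pi * snd x"

  obtain u' where u': "0 < u'" "u' < 1" "cos (2*pi * u' - al) \<le> - cos (eps/2)"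
    using choose_u'[OF e u] unfolding al_def by blast
  define a :: "real \<times> real" where "a = - (cos (2*pi * u'), sin (2*pi * u'))"
  define ee :: "real \<times> real" where "ee = (cos al, sin al)"
  define cp where "cp = cos eps"
  define c2 where "c2 = cos (eps/2)"
  have ae: "inner a ee \<ge> c2"
    using u'(3) unfolding a_def ee_def c2_def by (simp add: cos_diff)
  have na: "norm a = 1" unfolding a_def by (simp only: norm_minus_cancel norm_ev)
  have nee: "norm ee = 1" unfolding ee_def by simp
  have aa: "inner a a = 1" using na by (simp add: power2_norm_eq_inner[symmetric])
  have cp0: "cp > 0" unfolding cp_def using e by (intro cos_gt_zero_pi) auto
  have c2cp: "c2 > cp" unfolding c2_def cp_def using e by (intro cos_monotone_0_pi) auto
  have c21: "c2 \<le> 1" unfolding c2_def by simp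
  define k where "k = (c2 - cp)/4"
  have k0: "k > 0" and k1: "4*k \<le> 1 - cp" using c2cp c21 unfolding k_def by auto
  define \<delta> where "\<delta> = \<rho>/4"
  have d0: "\<delta> > 0" using rho unfolding \<delta>_def by simp
  define P where "P = \<xi> + \<delta> *\<^sub>R a"
  define r where "r = min (min (\<delta>*k) (k/(4*pi))) (min u' (1-u'))"
  have r0: "r > 0" unfolding r_def using d0 k0 u' by auto
  show ?thesis
  proof (intro exI[of _ "(P, u')"] exI[of _ r] conjI r0 allI impI)
    fix x1 :: mpoint assume dx: "dist x1 (P, u') < r"
    define \<eta> where "\<eta> = fst x1"
    define v where "v = snd x1"
    define d where "d = \<eta> - P"
    define h where "h = norm d"
    define g where "g = \<bar>v - u'\<bar>"
    have h0: "h \<ge> 0" unfolding h_def by simp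
    have hr: "h < \<delta>*k"
      using dist_fst_le[of x1 "(P,u')"] dx unfolding h_def d_def \<eta>_def r_def by (simp add: dist_norm)
    have gr: "g < k/(4*pi)" and gu: "g < u'" "g < 1 - u'"
      using dist_snd_le[of x1 "(P,u')"] dx unfolding g_def v_def r_def by (auto simp: dist_real_def)
    show "snd x1 \<in> {0..1}" using gu unfolding g_def v_def by auto
    define w where "w = \<eta> - \<xi>"
    have w: "w = \<delta> *\<^sub>R a + d" unfolding w_def d_def P_def by simp
    have nw: "norm w \<le> \<delta> + h" using norm_triangle_ineq[of "\<delta> *\<^sub>R a" d] na d0 unfolding w h_def by simp
    have kq: "k \<le> 1/4" using k1 cp0 by simp
    have hd: "h < \<delta>" using hr kq d0 
    proof -
      have "\<delta>*k \<le> \<delta>*(1/4)" using kq d0 by (intro mult_left_mono) auto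
      then show ?thesis using hr d0 by linarith
    qed
    have nw2: "norm w < \<rho>/2" using nw hd unfolding \<delta>_def by simp
    have deta: "dist \<xi> \<eta> = norm w" unfolding w_def by (simp add: dist_norm norm_minus_commute)
    have iwe: "inner w ee = \<delta> * inner a ee + inner d ee" unfolding w by (simp add: inner_add_left)
    have ide: "inner d ee \<ge> - h" using Cauchy_Schwarz_ineq2[of d ee] nee unfolding h_def by simp
    have "\<delta> * inner a ee \<ge> \<delta> * c2" using ae d0 by (simp add: mult_left_mono)
    have "norm w * cp \<le> (\<delta> + h) * cp" using nw cp0 by (simp add: mult_right_mono)
    have "h * cp \<le> h" using h0 cp0 k1 k0 by (simp add: mult_left_le)
    have "\<delta> * c2 - \<delta> * cp = 4 * (\<delta> * k)" unfolding k_def by (simp add: algebra_simps)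
    have A: "inner w ee > norm w * cp"
      using iwe ide \<open>\<delta> * inner a ee \<ge> \<delta> * c2\<close> \<open>norm w * cp \<le> (\<delta> + h) * cp\<close> \<open>h * cp \<le> h\<close>
        \<open>\<delta> * c2 - \<delta> * cp = 4 * (\<delta> * k)\<close> hr h0
        distrib_right[of \<delta> h cp]
      by linarith
    have "\<xi> + w \<in> cone eps x"
      using in_cone_inner[OF e(1) epi, of w x] A unfolding ee_def al_def cp_def \<xi>_def by simp
    then show "fst x1 \<in> cone eps x" unfolding w_def \<xi>_def \<eta>_def by simp
    show "\<forall>z\<in>phi. fst z \<in> cone eps x \<longrightarrow> dist (fst x) (fst x1) < dist (fst x) (fst z)"
    proof (intro ballI impI)
      fix z assume z: "z \<in> phi" "fst z \<in> cone eps x"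
      then have "fst z \<noteq> fst x" using not_cone_self[of x eps] by auto
      then have "\<rho> \<le> dist (fst x) (fst z)" using iso z by auto
      then show "dist (fst x) (fst x1) < dist (fst x) (fst z)"
        using deta nw2 rho unfolding \<xi>_def \<eta>_def by simp
    qed
    define eb :: "real \<times> real" where "eb = (cos (2*pi * v), sin (2*pi * v))"
    have ea: "eb = - a + (eb + a)" by simp
    have nb: "norm (eb + a) \<le> 4*pi * g"
      using ev_lip[of "2*pi * v" "2*pi * u'"] unfolding eb_def a_def g_def
      by (simp add: abs_mult flip: right_diff_distrib)
    have i1: "inner (-w) (-a) \<ge> \<delta> - h"
    proof -
      have "inner (-w) (-a) = \<delta> * inner a a + inner d a" unfolding w by (simp add: inner_add_left inner_diff_left)
      moreover have "inner d a \<ge> - h" using Cauchy_Schwarz_ineq2[of d a] na unfolding h_def by simp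
      ultimately show ?thesis using aa by simp
    qed
    define m where "m = 4*pi * g"
    have m0: "m \<ge> 0" unfolding m_def g_def by simp
    have mk: "m < k" using gr unfolding m_def by (simp add: field_simps)
    have i2: "inner (-w) (eb + a) \<ge> - ((\<delta> + h) * m)"
    proof -
      have "\<bar>inner (-w) (eb + a)\<bar> \<le> norm w * norm (eb + a)" using Cauchy_Schwarz_ineq2[of "-w" "eb + a"] by simp
      also have "\<dots> \<le> (\<delta> + h) * m" unfolding m_def using nw nb d0 h0 by (intro mult_mono) auto
      finally show ?thesis by simp
    qed
    have ib: "inner (-w) eb = inner (-w) (-a) + inner (-w) (eb + a)"
      by (subst ea) (simp only: inner_add_right)
    have "(\<delta> + h) * (m + cp) \<le> (\<delta> + \<delta>*k) * (k + cp)"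
      using hr mk m0 h0 cp0 d0 k0 by (intro mult_mono) auto
    also have "\<dots> = \<delta> * ((1 + k) * (k + cp))" by (simp add: algebra_simps)
    also have "\<dots> \<le> \<delta> * (1 - k)"
    proof -
      have "(1 + k) * (k + cp) = k + cp + k*k + k*cp" by algebra
      moreover have "k*k \<le> k" using k0 kq by (simp add: mult_left_le)
      moreover have "k*cp \<le> k" using k0 k1 cp0 by (simp add: mult_left_le)
      ultimately have "(1 + k) * (k + cp) \<le> 1 - k" using k1 by linarith
      then show ?thesis using d0 by (simp add: mult_left_mono)
    qed
    finally have big: "(\<delta> + h) * (m + cp) \<le> \<delta> * (1 - k)" .
    have "norm (-w) * cp \<le> (\<delta> + h) * cp" using nw cp0 by (simp add: mult_right_mono)
    have B: "inner (-w) eb > norm (-w) * cp"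
      using ib i1 i2 big \<open>norm (-w) * cp \<le> (\<delta> + h) * cp\<close> hr
        distrib_left[of "\<delta> + h" m cp] right_diff_distrib[of \<delta> 1 k]
      by linarith
    have "\<eta> + (-w) \<in> cone eps x1"
      using in_cone_inner[OF e(1) epi, of "-w" x1] B unfolding eb_def v_def cp_def \<eta>_def by simp
    then show "fst x \<in> cone eps x1" unfolding w_def \<xi>_def by simp
    show "\<forall>z\<in>phi. fst z \<in> cone eps x1 \<longrightarrow> dist (fst x1) (fst x) \<le> dist (fst x1) (fst z)"
    proof (intro ballI impI)
      fix z assume z: "z \<in> phi" "fst z \<in> cone eps x1"
      show "dist (fst x1) (fst x) \<le> dist (fst x1) (fst z)"
      proof (cases "fst z = fst x")
        case True then show ?thesis by simp
      next
        case False
        then have "\<rho> \<le> dist (fst x) (fst z)" using iso z by auto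
        moreover have "dist (fst x) (fst z) \<le> dist (fst x) (fst x1) + dist (fst x1) (fst z)"
          by (rule dist_triangle)
        ultimately show ?thesis using deta nw2 unfolding \<xi>_def \<eta>_def by (simp add: dist_commute)
      qed
    qed
  qed
qed

lemma tb1:
  assumes "xs \<in> tuple_ball 1 [C] r"
  shows "xs = [hd xs] \<and> dist (hd xs) C < r"
proof -
  have l: "length xs = 1" and s: "sqrt (\<Sum>i<1. (dist (xs ! i) ([C] ! i))\<^sup>2) < r"
    using assms unfolding tuple_ball_def by auto
  obtain x1 where "xs = [x1]" using l by (auto simp: length_Suc_conv)
  then show ?thesis using s by simp
qed

theorem proposition5p3:
  fixes eps :: real
  assumes "0 < eps" and "eps < pi / 2"
  shows "\<forall>phi \<in> Cprime eps. k_looping eps 1 phi"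
proof
  fix phi assume phi: "phi \<in> Cprime eps"
  have lf: "locally_finite_conf phi" using phi unfolding Cprime_def by auto
  show "k_looping eps 1 phi"
    unfolding k_looping_def
  proof (intro conjI phi ballI)
    fix x assume x: "x \<in> phi"
    obtain \<rho> where rho: "\<rho> > 0" "\<forall>z\<in>phi. fst z \<noteq> fst x \<longrightarrow> \<rho> \<le> dist (fst x) (fst z)"
      using isolation[OF lf x] by blast
    have "x \<in> UNIV \<times> {0..1}" using lf x unfolding locally_finite_conf_def mark_space_def by auto
    then have u: "snd x \<in> {0..1}" by (auto simp: mem_Times_iff)
    obtain C r where r: "r > 0" and G: "\<forall>x1. dist x1 C < r \<longrightarrow> snd x1 \<in> {0..1} \<and> fst x1 \<in> cone eps x \<and>
     (\<forall>z\<in>phi. fst z \<in> cone eps x \<longrightarrow> dist (fst x) (fst x1) < dist (fst x) (fst z)) \<and>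
     fst x \<in> cone eps x1 \<and>
     (\<forall>z\<in>phi. fst z \<in> cone eps x1 \<longrightarrow> dist (fst x1) (fst x) \<le> dist (fst x1) (fst z))"
      using geom[OF assms u rho(1,2)] by blast
    show "\<exists>c r. length c = 1 \<and> r > 0 \<and>
       tuple_ball 1 c r \<subseteq> {xs. set xs \<subseteq> mark_space} \<and>
       (\<forall>xs\<in>tuple_ball 1 c r. phi \<union> set xs \<in> Cprime eps \<longrightarrow>
          (let psi = phi \<union> set xs; S = insert x (set xs) in
             For eps x psi \<subseteq> S \<and>
             (\<forall>xi\<in>set xs. xi \<in> component eps psi x \<and> For eps xi psi \<subseteq> S) \<and>
             (\<forall>y\<in>phi - {x}. nav eps psi y \<noteq> nav eps phi y \<longrightarrow>
                nav eps psi y \<in> Back eps x psi \<inter> S)))"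
    proof (intro exI[of _ "[C]"] exI[of _ r] conjI r subsetI CollectI ballI impI)
      show "length [C] = 1" by simp
    next
      fix xs y assume xs: "xs \<in> tuple_ball 1 [C] r" and y: "y \<in> set xs"
      then have "xs = [hd xs]" "dist (hd xs) C < r" using tb1 by blast+
      then have "snd (hd xs) \<in> {0..1}" using G by blast
      then have "hd xs \<in> mark_space" unfolding mark_space_def by (auto simp: mem_Times_iff)
      then show "y \<in> mark_space" using \<open>xs = [hd xs]\<close> y by (metis empty_iff empty_set set_ConsD)
    next
      fix xs assume xs: "xs \<in> tuple_ball 1 [C] r" and psi: "phi \<union> set xs \<in> Cprime eps"
      then have e1: "xs = [hd xs]" and d1: "dist (hd xs) C < r" using tb1 by blast+
      have psi': "phi \<union> set [hd xs] \<in> Cprime eps" using psi e1 by metis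
      have "let psi = phi \<union> set [hd xs]; S = insert x (set [hd xs]) in
             For eps x psi \<subseteq> S \<and>
             (\<forall>xi\<in>set [hd xs]. xi \<in> component eps psi x \<and> For eps xi psi \<subseteq> S) \<and>
             (\<forall>y\<in>phi - {x}. nav eps psi y \<noteq> nav eps phi y \<longrightarrow>
                nav eps psi y \<in> Back eps x psi \<inter> S)"
        using G d1 by (intro comb_part[OF phi x _ _ _ _ psi']) blast+
      then show "let psi = phi \<union> set xs; S = insert x (set xs) in
             For eps x psi \<subseteq> S \<and>
             (\<forall>xi\<in>set xs. xi \<in> component eps psi x \<and> For eps xi psi \<subseteq> S) \<and>
             (\<forall>y\<in>phi - {x}. nav eps psi y \<noteq> nav eps phi y \<longrightarrow>
                nav eps psi y \<in> Back eps x psi \<inter> S)"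
        using e1 by metis
    qed
  qed
qed

end
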